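(* Let $\alpha,\beta,\gamma,\delta>0$ and $u_0,v_0,w_0>0$. Then the ODE system $u'=\delta uw$, $v'=\alpha vw$, $w'=-\beta uw-\gamma vw$ ($t>0$) with $u(0)=u_0$, $v(0)=v_0$, $w(0)=w_0$ has a unique global positive solution $(u,v,w)$, and there exist nonnegative numbers $u_\infty,v_\infty$ such that $u(t)\to u_\infty$, $v(t)\to v_\infty$ and $w(t)\to0$ as $t\to\infty$. Moreover, if $u_0=v_0$, then $\operatorname{sgn}(u_\infty-v_\infty)=\operatorname{sgn}(\delta-\alpha)$. *)

theory Defs
  imports "HOL-Analysis.Analysis"
begin

definition is_global_pos_sol ::
  "real \<Rightarrow> real \<Rightarrow> real \<Rightarrow> real \<Rightarrow> real \<Rightarrow> real \<Rightarrow> real \<Rightarrow>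
   (real \<Rightarrow> real) \<Rightarrow> (real \<Rightarrow> real) \<Rightarrow> (real \<Rightarrow> real) \<Rightarrow> bool" where
  "is_global_pos_sol \<alpha> \<beta> \<gamma> \<delta> u0 v0 w0 u v w \<longleftrightarrow>
     continuous_on {0..} u \<and> continuous_on {0..} v \<and> continuous_on {0..} w \<and>
     u 0 = u0 \<and> v 0 = v0 \<and> w 0 = w0 \<and>
     (\<forall>t\<ge>0. u t > 0 \<and> v t > 0 \<and> w t > 0) \<and>
     (\<forall>t>0. (u has_real_derivative \<delta> * u t * w t) (at t) \<and>
            (v has_real_derivative \<alpha> * v t * w t) (at t) \<and>
            (w has_real_derivative (- \<beta> * u t * w t - \<gamma> * v t * w t)) (at t))"

end

theory Submission
  imports Defs
begin

lemma mvt_mono: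
  fixes f f' :: "real \<Rightarrow> real"
  assumes "x \<le> y" "continuous_on {x..y} f"
    "\<And>z. x<z \<Longrightarrow> z<y \<Longrightarrow> (f has_real_derivative f' z) (at z)"
    "\<And>z. x<z \<Longrightarrow> z<y \<Longrightarrow> f' z \<ge> 0"
  shows "f x \<le> f y"
proof (cases "x = y")
  case False
  then have xy: "x<y" using assms by simp
  have "\<And>z. x<z \<Longrightarrow> z<y \<Longrightarrow> f differentiable (at z)"
    using assms(3) real_differentiable_def by blast
  from MVT[OF xy assms(2) this] obtain l z where lz: "x<z" "z<y" "DERIV f z :> l" "f y - f x = (y-x)*l"
    by blast
  then have "l = f' z" using DERIV_unique assms(3) by blast
  then have "0 \<le> (y-x)*l" using assms(4)[OF lz(1,2)] xy by simp
  then show ?thesis using lz(4) by linarith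
qed simp

lemma mvt_strict:
  fixes f f' :: "real \<Rightarrow> real"
  assumes "x < y" "continuous_on {x..y} f"
    "\<And>z. x<z \<Longrightarrow> z<y \<Longrightarrow> (f has_real_derivative f' z) (at z)"
    "\<And>z. x<z \<Longrightarrow> z<y \<Longrightarrow> f' z > 0"
  shows "f x < f y"
proof -
  have "\<And>z. x<z \<Longrightarrow> z<y \<Longrightarrow> f differentiable (at z)"
    using assms(3) real_differentiable_def by blast
  from MVT[OF assms(1) assms(2) this] obtain l z where lz: "x<z" "z<y" "DERIV f z :> l" "f y - f x = (y-x)*l"
    by blast
  then have "l = f' z" using DERIV_unique assms(3) by blast
  then have "0 < (y-x)*l" using assms(4)[OF lz(1,2)] assms(1) by simp
  then show ?thesis using lz(4) by linarith
qed

lemma mvt_const0: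
  fixes f :: "real \<Rightarrow> real"
  assumes "continuous_on {0..} f" "\<And>t. t>0 \<Longrightarrow> (f has_real_derivative 0) (at t)" "t \<ge> 0"
  shows "f t = f 0"
proof -
  have c: "continuous_on {0..t} f" using assms(1) by (rule continuous_on_subset) auto
  have "f 0 \<le> f t" by (rule mvt_mono[OF assms(3) c, of "\<lambda>_. 0"]) (use assms(2) in auto)
  moreover have "- f 0 \<le> - f t"
    by (rule mvt_mono[OF assms(3) continuous_on_minus[OF c], of "\<lambda>_. 0"])
       (use assms(2) in \<open>auto intro!: derivative_eq_intros\<close>)
  ultimately show ?thesis by simp
qed

locale sys =
  fixes \<alpha> \<beta> \<gamma> \<delta> u0 v0 w0 :: real
  assumes pos: "\<alpha>>0" "\<beta>>0" "\<gamma>>0" "\<delta>>0" "u0>0" "v0>0" "w0>0"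
begin

definition F where "F s = \<beta> * u0/\<delta> * (exp(\<delta> * s)-1) + \<gamma> * v0/\<alpha> * (exp(\<alpha> * s)-1)"
definition G where "G s = \<beta> * u0 * exp(\<delta> * s) + \<gamma> * v0 * exp(\<alpha> * s)"

lemma F_deriv: "(F has_real_derivative G s) (at s)"
  unfolding F_def[abs_def] G_def
  apply (rule derivative_eq_intros refl)+
  using pos by (simp add: field_simps)

lemma F_cont: "isCont F s" using F_deriv DERIV_isCont by blast

lemma G_pos: "G s > 0" using pos by (simp add: G_def add_pos_pos)

lemma G_mono: "s \<le> s' \<Longrightarrow> G s \<le> G s'"
  using pos unfolding G_def
  by (intro add_mono mult_left_mono) (auto simp: mult_left_mono)

lemma F_0: "F 0 = 0" by (simp add: F_def)

lemma F_strict: "s < s' \<Longrightarrow> F s < F s'"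
  using mvt_strict[of s s' F G] F_cont G_pos F_deriv
  by (simp add: continuous_at_imp_continuous_on)

lemma F_big: assumes "s \<ge> 0" shows "F s \<ge> (\<beta> * u0 + \<gamma> * v0) * s"
proof -
  have e1: "exp(\<delta> * s) - 1 \<ge> \<delta> * s" and e2: "exp(\<alpha> * s) - 1 \<ge> \<alpha> * s"
    using exp_ge_add_one_self[of "\<delta> * s"] exp_ge_add_one_self[of "\<alpha> * s"] by linarith+
  have "\<beta> * u0/\<delta> * (exp(\<delta> * s)-1) \<ge> \<beta> * u0/\<delta> * (\<delta> * s)"
    by (rule mult_left_mono[OF e1]) (use pos in simp)
  moreover have "\<gamma> * v0/\<alpha> * (exp(\<alpha> * s)-1) \<ge> \<gamma> * v0/\<alpha> * (\<alpha> * s)"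
    by (rule mult_left_mono[OF e2]) (use pos in simp)
  moreover have "\<beta> * u0/\<delta> * (\<delta> * s) = \<beta> * u0 * s" "\<gamma> * v0/\<alpha> * (\<alpha> * s) = \<gamma> * v0 * s"
    using pos by simp_all
  moreover have "(\<beta> * u0 + \<gamma> * v0) * s = \<beta> * u0 * s + \<gamma> * v0 * s" by (simp add: algebra_simps)
  ultimately show ?thesis unfolding F_def by linarith
qed

lemma S_ex: "\<exists>s. s > 0 \<and> F s = w0"
proof -
  define s1 where "s1 = w0/(\<beta> * u0 + \<gamma> * v0)"
  have p: "\<beta> * u0 + \<gamma> * v0 > 0" using pos by (simp add: add_pos_pos)
  then have s1: "s1 > 0" using pos by (simp add: s1_def)
  have "F s1 \<ge> w0" using F_big[of s1] s1 p by (simp add: s1_def)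
  then obtain s where s: "0 \<le> s" "s \<le> s1" "F s = w0"
    using IVT'[of F 0 w0 s1] F_0 pos s1 F_cont by (auto simp: continuous_at_imp_continuous_on)
  then have "s \<noteq> 0" using F_0 pos by auto
  then have "s > 0" using s by simp
  then show ?thesis using s(3) by blast
qed

definition S where "S = (SOME s. s > 0 \<and> F s = w0)"
lemma S: "S > 0" "F S = w0" using someI_ex[OF S_ex] by (auto simp: S_def)

definition g where "g s = w0 - F s"
lemma g_pos_iff: "g s > 0 \<longleftrightarrow> s < S"
  using F_strict[of s S] F_strict[of S s] S by (auto simp: g_def) (smt)
lemma g_S: "g S = 0" using S by (simp add: g_def)
lemma g_deriv: "(g has_real_derivative - G s) (at s)"
  unfolding g_def[abs_def] using DERIV_diff[OF DERIV_const F_deriv] by simp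
lemma g_cont: "isCont g s" using g_deriv DERIV_isCont by blast

lemma cont_ig: assumes "r < S" shows "continuous_on {-1..r} (\<lambda>\<sigma>. 1/g \<sigma>)"
proof -
  have "g x \<noteq> 0" if "x \<in> {-1..r}" for x
  proof -
    have "x < S" using that assms by auto
    then show ?thesis using g_pos_iff[of x] by simp
  qed
  then show ?thesis
    by (intro continuous_on_divide continuous_on_const continuous_at_imp_continuous_on ballI g_cont) auto
qed

definition T where "T s = integral {-1..s} (\<lambda>\<sigma>. 1/g \<sigma>)"

lemma T_deriv: assumes "-1 < s" "s < S" shows "(T has_real_derivative 1/g s) (at s)"
proof -
  define r where "r = (s+S)/2"
  have r: "s < r" "r < S" using assms by (auto simp: r_def)
  have "(T has_real_derivative 1/g s) (at s within {-1..r})"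
    unfolding T_def[abs_def] using integral_has_real_derivative[OF cont_ig[OF r(2)], of s] assms r by auto
  then show ?thesis using at_within_Icc_at[of "-1" s r] assms r by simp
qed

lemma T_cont_on: assumes "r < S" shows "continuous_on {-1..r} T"
proof (rule DERIV_continuous_on)
  fix x assume "x \<in> {-1..r}"
  then show "(T has_real_derivative 1/g x) (at x within {-1..r})"
    unfolding T_def[abs_def] using integral_has_real_derivative[OF cont_ig[OF assms], of x] by auto
qed

lemma T_m1: "T (-1) = 0" by (simp add: T_def)

lemma T_strict: assumes "-1 \<le> x" "x < y" "y < S" shows "T x < T y"
  by (rule mvt_strict[OF assms(2), of T "\<lambda>z. 1/g z"])
     (use assms T_cont_on[OF assms(3)] in \<open>auto intro: continuous_on_subset T_deriv simp: g_pos_iff\<close>)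


lemma g_le: assumes "s \<le> S" shows "g s \<le> G S * (S - s)"
proof -
  have "G S * s - F s \<le> G S * S - F S"
  proof (rule mvt_mono[OF assms, where f' = "\<lambda>z. G S - G z"])
    show "continuous_on {s..S} (\<lambda>x. G S * x - F x)"
      by (intro continuous_intros continuous_at_imp_continuous_on ballI F_cont)
    fix z assume "s < z" "z < S"
    show "((\<lambda>x. G S * x - F x) has_real_derivative G S - G z) (at z)"
      using DERIV_diff[OF DERIV_cmult[OF DERIV_ident, of "G S"] F_deriv[of z]] by simp
    show "0 \<le> G S - G z" using G_mono[of z S] \<open>z < S\<close> by simp
  qed
  then show ?thesis using S by (simp add: g_def algebra_simps)
qed

lemma T_lower: assumes "0 \<le> s" "s < S"
  shows "T 0 + (ln S - ln (S - s)) / G S \<le> T s"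
proof -
  have GS: "G S > 0" by (rule G_pos)
  have "T 0 + ln (S - 0) / G S \<le> T s + ln (S - s) / G S"
  proof (rule mvt_mono[OF assms(1), where f' = "\<lambda>z. 1/g z + - 1/(G S * (S - z))"])
    have "continuous_on {0..s} T" using T_cont_on[OF assms(2)] by (rule continuous_on_subset) auto
    moreover have "continuous_on {0..s} (\<lambda>x. ln (S - x) / G S)"
      using assms GS by (intro continuous_intros) auto
    ultimately show "continuous_on {0..s} (\<lambda>x. T x + ln (S - x) / G S)"
      by (rule continuous_on_add)
    fix z assume z: "0 < z" "z < s"
    have d: "((\<lambda>x. ln (S - x) / G S) has_real_derivative - 1/(G S * (S - z))) (at z)"
      using z assms GS by (auto intro!: derivative_eq_intros simp: field_simps)
    show "((\<lambda>x. T x + ln (S - x) / G S) has_real_derivative 1/g z + - 1/(G S * (S - z))) (at z)"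
      using DERIV_add[OF T_deriv d] z assms by simp
    have "0 < g z" using z assms g_pos_iff by simp
    moreover have "g z \<le> G S * (S - z)" using g_le z assms by simp
    ultimately have "1/(G S * (S - z)) \<le> 1/g z" by (intro frac_le) auto
    then show "0 \<le> 1/g z + - 1/(G S * (S - z))" by simp
  qed
  then show ?thesis by (simp add: diff_divide_distrib)
qed

lemma T_surj: assumes "y > 0" shows "\<exists>s. -1 < s \<and> s < S \<and> T s = y"
proof -
  have GS: "G S > 0" by (rule G_pos)
  define m where "m = max 0 (y - T 0)"
  define s1 where "s1 = S - S * exp(-(G S * m))"
  have m: "m \<ge> 0" by (simp add: m_def)
  have "exp(-(G S * m)) \<le> 1" using GS m by simp
  then have s1a: "s1 \<ge> 0" using S by (simp add: s1_def)
  have s1b: "s1 < S" using S by (simp add: s1_def)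
  have "ln (S - s1) = ln S - G S * m" using S by (simp add: s1_def ln_mult)
  then have "T 0 + m \<le> T s1" using T_lower[OF s1a s1b] GS by simp
  then have "y \<le> T s1" by (simp add: m_def)
  then obtain s where s: "-1 \<le> s" "s \<le> s1" "T s = y"
    using IVT'[of T "-1" y s1] T_m1 assms s1a T_cont_on[OF s1b] by auto
  then have "s \<noteq> -1" using T_m1 assms by auto
  then show ?thesis using s s1b by (intro exI[of _ s]) auto
qed

definition Winv where "Winv y = (THE s. -1 < s \<and> s < S \<and> T s = y)"

lemma T_inj: "-1 < x \<Longrightarrow> x < S \<Longrightarrow> -1 < y \<Longrightarrow> y < S \<Longrightarrow> T x = T y \<Longrightarrow> x = y"
  using T_strict[of x y] T_strict[of y x] by (cases x y rule: linorder_cases) auto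

lemma Winv_T: assumes "-1 < s" "s < S" shows "Winv (T s) = s"
  unfolding Winv_def using assms T_inj by (intro the_equality) auto

lemma T_Winv: assumes "y > 0" shows "T (Winv y) = y" "-1 < Winv y" "Winv y < S"
  using T_surj[OF assms] Winv_T by auto

lemma Winv_cont: assumes "y > 0" shows "isCont Winv y"
proof -
  define s where "s = Winv y"
  have s: "-1 < s" "s < S" "T s = y" using T_Winv[OF assms] by (auto simp: s_def)
  have "isCont Winv (T s)"
  proof (rule isCont_inverse_function2[of "(s - 1)/2" s "(s+S)/2"])
    show "(s - 1)/2 < s" "s < (s+S)/2" using s by auto
    fix z assume z: "(s - 1)/2 \<le> z" "z \<le> (s+S)/2"
    then have "-1 < z" "z < S" using s by auto
    then show "Winv (T z) = z" "isCont T z" using Winv_T T_deriv DERIV_isCont by blast+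
  qed
  then show ?thesis using s by simp
qed

lemma Winv_deriv: assumes "y > 0" shows "(Winv has_real_derivative g (Winv y)) (at y)"
proof -
  have w: "-1 < Winv y" "Winv y < S" using T_Winv[OF assms] by auto
  have "(Winv has_real_derivative inverse (1 / g (Winv y))) (at y)"
  proof (rule DERIV_inverse_function[where f = T and a = 0 and b = "y+1"])
    show "(T has_real_derivative 1 / g (Winv y)) (at (Winv y))" using T_deriv w by blast
    show "1 / g (Winv y) \<noteq> 0" using w g_pos_iff[of "Winv y"] by simp
    show "0 < y" "y < y + 1" using assms by auto
    show "\<And>z. 0 < z \<Longrightarrow> z < y + 1 \<Longrightarrow> T (Winv z) = z" using T_Winv by blast
    show "isCont Winv y" by (rule Winv_cont[OF assms])
  qed
  then show ?thesis by simp
qed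


definition c where "c = T 0"
lemma c_pos: "c > 0" using T_strict[of "-1" 0] S T_m1 by (simp add: c_def)

definition Ws where "Ws t = Winv (t + c)"

lemma Ws_bnd: "t \<ge> 0 \<Longrightarrow> -1 < Ws t \<and> Ws t < S"
  using T_Winv[of "t + c"] c_pos by (simp add: Ws_def)

lemma Ws0: "Ws 0 = 0" using Winv_T[of 0] S by (simp add: Ws_def c_def)

lemma Ws_deriv: assumes "t \<ge> 0" shows "(Ws has_real_derivative g (Ws t)) (at t)"
proof -
  have "((\<lambda>t. t + c) has_real_derivative 1) (at t)" by (auto intro!: derivative_eq_intros)
  from DERIV_chain2[OF Winv_deriv[of "t + c"] this] show ?thesis
    using c_pos assms by (simp add: Ws_def[abs_def])
qed

lemma Ws_cont: "continuous_on {0..} Ws"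
  by (intro continuous_at_imp_continuous_on ballI) (use Ws_deriv DERIV_isCont in auto)

lemma Ws_lim: "(Ws \<longlongrightarrow> S) at_top"
proof (rule order_tendstoI)
  fix a assume "a < S"
  define s where "s = (max a 0 + S)/2"
  have s: "a < s" "0 < s" "s < S" using \<open>a < S\<close> S by (auto simp: s_def)
  have "a < Ws t" if t: "t \<ge> max 0 (T s)" for t
  proof -
    have b: "-1 < Ws t" "Ws t < S" using Ws_bnd t by auto
    have "s \<le> Ws t"
    proof (rule ccontr)
      assume "\<not> s \<le> Ws t"
      then have "T (Ws t) < T s" using T_strict[of "Ws t" s] b s by auto
      moreover have "T (Ws t) = t + c" using T_Winv[of "t + c"] c_pos t by (simp add: Ws_def)
      ultimately show False using t c_pos by simp
    qed
    then show ?thesis using s by simp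
  qed
  then show "eventually (\<lambda>t. a < Ws t) at_top"
    unfolding eventually_at_top_linorder by blast
next
  fix a assume "S < a"
  have "Ws n < a" if "n \<ge> 0" for n using Ws_bnd[OF that] \<open>S < a\<close> by linarith
  then show "eventually (\<lambda>t. Ws t < a) at_top"
    unfolding eventually_at_top_linorder by blast
qed

definition us where "us t = u0 * exp (\<delta> * Ws t)"
definition vs where "vs t = v0 * exp (\<alpha> * Ws t)"
definition ws where "ws t = g (Ws t)"

lemma sol: "is_global_pos_sol \<alpha> \<beta> \<gamma> \<delta> u0 v0 w0 us vs ws"
  unfolding is_global_pos_sol_def
proof (intro conjI allI impI)
  show "continuous_on {0..} us" unfolding us_def[abs_def] using Ws_cont by (intro continuous_intros)
  show "continuous_on {0..} vs" unfolding vs_def[abs_def] using Ws_cont by (intro continuous_intros)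
  show "continuous_on {0..} ws" unfolding ws_def[abs_def]
    by (rule continuous_on_compose2[OF _ Ws_cont, of UNIV]) (auto intro: continuous_at_imp_continuous_on g_cont)
  show "us 0 = u0" "vs 0 = v0" "ws 0 = w0" by (simp_all add: us_def vs_def ws_def Ws0 g_def F_0)
  fix t :: real
  assume t: "0 \<le> t"
  show "0 < us t" "0 < vs t" using pos by (simp_all add: us_def vs_def)
  show "0 < ws t" using Ws_bnd[OF t] g_pos_iff by (simp add: ws_def)
next
  fix t :: real
  assume t: "0 < t"
  have d: "(Ws has_real_derivative g (Ws t)) (at t)" using Ws_deriv t by simp
  show "(us has_real_derivative \<delta> * us t * ws t) (at t)"
    unfolding us_def[abs_def]
    apply (rule derivative_eq_intros refl d)+
    by (simp add: us_def ws_def)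
  show "(vs has_real_derivative \<alpha> * vs t * ws t) (at t)"
    unfolding vs_def[abs_def]
    apply (rule derivative_eq_intros refl d)+
    by (simp add: vs_def ws_def)
  show "(ws has_real_derivative - \<beta> * us t * ws t - \<gamma> * vs t * ws t) (at t)"
  proof -
    have "- G (Ws t) * g (Ws t) = - \<beta> * us t * ws t - \<gamma> * vs t * ws t"
      unfolding G_def us_def vs_def ws_def by (simp add: algebra_simps)
    then show ?thesis unfolding ws_def[abs_def] using DERIV_chain2[OF g_deriv d] by simp
  qed
qed


lemma T_cont_open: "continuous_on {-1<..<S} T"
  by (intro continuous_at_imp_continuous_on ballI) (use T_deriv DERIV_isCont in auto)

lemma uniq:
  assumes sol1: "is_global_pos_sol \<alpha> \<beta> \<gamma> \<delta> u0 v0 w0 u1 v1 w1" and t: "t \<ge> 0"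
  shows "u1 t = us t \<and> v1 t = vs t \<and> w1 t = ws t"
proof -
  have cu: "continuous_on {0..} u1" and cv: "continuous_on {0..} v1" and cw: "continuous_on {0..} w1"
    and i: "u1 0 = u0" "v1 0 = v0" "w1 0 = w0"
    and ps: "\<And>t. t \<ge> 0 \<Longrightarrow> u1 t > 0 \<and> v1 t > 0 \<and> w1 t > 0"
    and du: "\<And>t. t > 0 \<Longrightarrow> (u1 has_real_derivative \<delta> * u1 t * w1 t) (at t)"
    and dv: "\<And>t. t > 0 \<Longrightarrow> (v1 has_real_derivative \<alpha> * v1 t * w1 t) (at t)"
    and dw: "\<And>t. t > 0 \<Longrightarrow> (w1 has_real_derivative (- \<beta> * u1 t * w1 t - \<gamma> * v1 t * w1 t)) (at t)"
    using sol1 unfolding is_global_pos_sol_def by auto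
  define V where "V t = (ln (u1 t) - ln u0) / \<delta>" for t
  have Vc: "continuous_on {0..} V" unfolding V_def[abs_def]
    by (intro continuous_intros cu) (use ps pos in force)+
  have Vd: "(V has_real_derivative w1 t) (at t)" if "t > 0" for t
  proof -
    have "((\<lambda>x. ln (u1 x)) has_real_derivative 1 / u1 t * (\<delta> * u1 t * w1 t)) (at t)"
      using DERIV_chain2[OF DERIV_ln_divide du[OF that]] ps[of t] that by simp
    from DERIV_cdivide[OF DERIV_diff[OF this DERIV_const[of "ln u0"]], of \<delta>]
    show ?thesis using ps[of t] that pos unfolding V_def[abs_def] by simp
  qed
  have V0: "V 0 = 0" by (simp add: V_def i)
  have Vu: "u1 x = u0 * exp (\<delta> * V x)" if "x \<ge> 0" for x
  proof -
    have "exp (\<delta> * V x) = u1 x / u0" using ps[OF that] pos by (simp add: V_def exp_diff)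
    then show ?thesis using pos by simp
  qed
  have Vv: "v1 x = v0 * exp (\<alpha> * V x)" if "x \<ge> 0" for x
  proof -
    define D where "D x = ln (v1 x) - \<alpha> * V x" for x
    have "D x = D 0"
    proof (rule mvt_const0[OF _ _ that])
      show "continuous_on {0..} D" unfolding D_def[abs_def]
        by (intro continuous_intros cv Vc) (use ps in force)+
      fix t :: real assume t: "t > 0"
      have "((\<lambda>x. ln (v1 x)) has_real_derivative 1 / v1 t * (\<alpha> * v1 t * w1 t)) (at t)"
        using DERIV_chain2[OF DERIV_ln_divide dv[OF t]] ps[of t] t by simp
      from DERIV_diff[OF this DERIV_cmult[OF Vd[OF t], of \<alpha>]]
      show "(D has_real_derivative 0) (at t)" using ps[of t] t unfolding D_def[abs_def] by simp
    qed
    then have "ln (v1 x) = ln v0 + \<alpha> * V x" by (simp add: D_def V0 i)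
    then have "exp (ln (v1 x)) = exp (ln v0) * exp (\<alpha> * V x)" by (simp add: exp_add)
    then show ?thesis using ps[OF that] pos by simp
  qed
  have Vw: "w1 x = g (V x)" if "x \<ge> 0" for x
  proof -
    define E where "E x = w1 x + F (V x)" for x
    have "E x = E 0"
    proof (rule mvt_const0[OF _ _ that])
      show "continuous_on {0..} E" unfolding E_def[abs_def]
        by (intro continuous_on_add cw continuous_on_compose2[OF _ Vc, of UNIV])
           (auto intro: continuous_at_imp_continuous_on F_cont)
      fix t :: real assume t: "t > 0"
      from DERIV_add[OF dw[OF t] DERIV_chain2[OF F_deriv Vd[OF t]]]
      have "(E has_real_derivative
          (- \<beta> * u1 t * w1 t - \<gamma> * v1 t * w1 t) + G (V t) * w1 t) (at t)"
        unfolding E_def[abs_def] by simp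
      moreover have "(- \<beta> * u1 t * w1 t - \<gamma> * v1 t * w1 t) + G (V t) * w1 t = 0"
        using Vu[of t] Vv[of t] t unfolding G_def by (simp add: algebra_simps)
      ultimately show "(E has_real_derivative 0) (at t)" by simp
    qed
    then show ?thesis by (simp add: E_def V0 i F_0 g_def)
  qed
  have VS: "V x < S" if "x \<ge> 0" for x using Vw[OF that] ps[OF that] g_pos_iff by auto
  have Vnn: "V x \<ge> 0" if "x \<ge> 0" for x
  proof -
    have "V 0 \<le> V x"
    proof (rule mvt_mono[OF that, where f=V and f'=w1])
      show "continuous_on {0..x} V" using Vc by (rule continuous_on_subset) auto
      fix z :: real assume "0 < z" "z < x"
      then show "(V has_real_derivative w1 z) (at z)" "0 \<le> w1 z" using Vd ps[of z] by auto
    qed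
    then show ?thesis using V0 by simp
  qed
  define H where "H x = T (V x) - x" for x
  have "H t = H 0"
  proof (rule mvt_const0[OF _ _ t])
    show "continuous_on {0..} H" unfolding H_def[abs_def]
      using VS Vnn by (intro continuous_on_diff continuous_on_id continuous_on_compose2[OF T_cont_open Vc])
        force+
    fix x :: real assume x: "x > 0"
    have b: "-1 < V x" "V x < S" using VS[of x] Vnn[of x] x by auto
    have "g (V x) > 0" using b g_pos_iff by simp
    then have "1 / g (V x) * w1 x = 1" using Vw[of x] x by simp
    with DERIV_diff[OF DERIV_chain2[OF T_deriv[OF b] Vd[OF x]] DERIV_ident]
    show "(H has_real_derivative 0) (at x)" unfolding H_def[abs_def] by simp
  qed
  then have "T (V t) = t + c" by (simp add: H_def V0 c_def)
  then have "Ws t = V t" using Winv_T[of "V t"] VS[OF t] Vnn[OF t] by (simp add: Ws_def)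
  then show ?thesis using Vu[OF t] Vv[OF t] Vw[OF t] by (simp add: us_def vs_def ws_def)
qed

end

theorem mainTheorem19:
  fixes \<alpha> \<beta> \<gamma> \<delta> u0 v0 w0 :: real
  assumes "\<alpha> > 0" "\<beta> > 0" "\<gamma> > 0" "\<delta> > 0"
    and "u0 > 0" "v0 > 0" "w0 > 0"
  shows "\<exists>u v w. is_global_pos_sol \<alpha> \<beta> \<gamma> \<delta> u0 v0 w0 u v w \<and>
           (\<forall>u' v' w'. is_global_pos_sol \<alpha> \<beta> \<gamma> \<delta> u0 v0 w0 u' v' w' \<longrightarrow>
              (\<forall>t\<ge>0. u' t = u t \<and> v' t = v t \<and> w' t = w t)) \<and>
           (\<exists>u_inf v_inf. u_inf \<ge> 0 \<and> v_inf \<ge> 0 \<and>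
              (u \<longlongrightarrow> u_inf) at_top \<and> (v \<longlongrightarrow> v_inf) at_top \<and>
              (w \<longlongrightarrow> 0) at_top \<and>
              (u0 = v0 \<longrightarrow> sgn (u_inf - v_inf) = sgn (\<delta> - \<alpha>)))"
proof -
  interpret sys \<alpha> \<beta> \<gamma> \<delta> u0 v0 w0 using assms by unfold_locales
  have lu: "(us \<longlongrightarrow> u0 * exp (\<delta> * S)) at_top" unfolding us_def[abs_def]
    by (intro tendsto_intros Ws_lim)
  have lv: "(vs \<longlongrightarrow> v0 * exp (\<alpha> * S)) at_top" unfolding vs_def[abs_def]
    by (intro tendsto_intros Ws_lim)
  have lw: "(ws \<longlongrightarrow> 0) at_top"
    using isCont_tendsto_compose[OF g_cont Ws_lim] g_S unfolding ws_def[abs_def] by simp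
  have sg: "sgn (u0 * exp (\<delta> * S) - v0 * exp (\<alpha> * S)) = sgn (\<delta> - \<alpha>)" if e: "u0 = v0"
  proof (cases \<delta> \<alpha> rule: linorder_cases)
    case less
    then have "\<delta> * S < \<alpha> * S" using S by simp
    then have "u0 * exp (\<delta> * S) < v0 * exp (\<alpha> * S)" using e assms by simp
    then show ?thesis using less by simp
  next
    case equal
    then show ?thesis using e by simp
  next
    case greater
    then have "\<alpha> * S < \<delta> * S" using S by simp
    then have "v0 * exp (\<alpha> * S) < u0 * exp (\<delta> * S)" using e assms by simp
    then show ?thesis using greater by simp
  qed
  have nn: "u0 * exp (\<delta> * S) \<ge> 0" "v0 * exp (\<alpha> * S) \<ge> 0" using assms by simp_all
  show ?thesis
    apply (rule exI[of _ us], rule exI[of _ vs], rule exI[of _ ws])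
    apply (rule conjI[OF sol], rule conjI)
     apply (use uniq in blast)
    apply (rule exI[of _ "u0 * exp (\<delta> * S)"], rule exI[of _ "v0 * exp (\<alpha> * S)"])
    using nn lu lv lw sg by blast
qed

end
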